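(* Let $K\in\mathbb{N}$, $\gamma>0$, and let $h\colon\mathbb{R}^K\to\mathbb{R}\cup\{+\infty\}$, $h(\alpha)=\|\alpha\|_0+\iota_{\Delta_K}(\alpha)$. Let $\alpha\in\Delta_K$ with $\alpha_1\le\cdots\le\alpha_K$. Then: (i) An element $\hat\alpha\in\operatorname{prox}_{\gamma h}(\alpha)$ is given by $\hat\alpha_J=0$ and $\hat\alpha_{J^c}=\alpha_{J^c}+\frac{1}{|J^c|}\sum_{k\in J}\alpha_k$, where $J=[K_0]=\{1,\dots,K_0\}$, $J^c=[K]\setminus J$, and $$K_0\in\operatorname*{argmin}_{n\in\{0,\dots,K-1\}} g(n),\qquad g(n)=\frac{1}{2\gamma}\frac{\big(\sum_{k=1}^n\alpha_k\big)^2}{K-n}+\frac{1}{2\gamma}\sum_{k=1}^n\alpha_k^2-n.$$ (ii) If $\alpha_i=0$ for some $i\in\{1,\dots,K\}$, then $\hat\alpha_i=0$ for every $\hat\alpha\in\operatorname{prox}_{\gamma h}(\alpha)$.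
   Context: $\Delta_K=\{\alpha\in\mathbb{R}^K_{\ge0}:\sum_{k=1}^K\alpha_k=1\}$ is the probability simplex; $\|\alpha\|_0=|\{k:\alpha_k>0\}|$; $\iota_{\Delta_K}(\alpha)=0$ if $\alpha\in\Delta_K$ and $+\infty$ otherwise. For a proper lower semicontinuous $g\colon\mathbb{R}^K\to\mathbb{R}\cup\{+\infty\}$ and $\gamma>0$, the (possibly set-valued) proximal operator is $\operatorname{prox}_{\gamma g}(x)=\operatorname*{argmin}_{y\in\mathbb{R}^K}\{\frac{1}{2\gamma}\|x-y\|^2+g(y)\}$, with $\|\cdot\|$ the Euclidean norm. For $J\subseteq[K]$, $\alpha_J=(\alpha_k)_{k\in J}$; $[0]=\emptyset$. *)

theory Defs
  imports "HOL-Analysis.Analysis"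
begin

text \<open>Vectors in R^K are represented as functions nat => real indexed by {1..K}
  and vanishing outside {1..K}.\<close>

definition RK :: "nat \<Rightarrow> (nat \<Rightarrow> real) set" where
  "RK K = {a. \<forall>k. k \<notin> {1..K} \<longrightarrow> a k = 0}"

definition prob_simplex :: "nat \<Rightarrow> (nat \<Rightarrow> real) set" where
  "prob_simplex K = {a \<in> RK K. (\<forall>k\<in>{1..K}. a k \<ge> 0) \<and> (\<Sum>k=1..K. a k) = 1}"

definition l0norm :: "nat \<Rightarrow> (nat \<Rightarrow> real) \<Rightarrow> nat" where
  "l0norm K a = card {k\<in>{1..K}. a k > 0}"

definition indicator_simplex :: "nat \<Rightarrow> (nat \<Rightarrow> real) \<Rightarrow> ereal" where
  "indicator_simplex K a = (if a \<in> prob_simplex K then 0 else \<infinity>)"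

definition hfun :: "nat \<Rightarrow> (nat \<Rightarrow> real) \<Rightarrow> ereal" where
  "hfun K a = ereal (real (l0norm K a)) + indicator_simplex K a"

definition sqdist :: "nat \<Rightarrow> (nat \<Rightarrow> real) \<Rightarrow> (nat \<Rightarrow> real) \<Rightarrow> real" where
  "sqdist K x y = (\<Sum>k=1..K. (x k - y k)^2)"

definition prox :: "nat \<Rightarrow> real \<Rightarrow> ((nat \<Rightarrow> real) \<Rightarrow> ereal) \<Rightarrow> (nat \<Rightarrow> real) \<Rightarrow> (nat \<Rightarrow> real) set" where
  "prox K \<gamma> g x = {y \<in> RK K. \<forall>z \<in> RK K.
      ereal (sqdist K x y / (2*\<gamma>)) + g y \<le> ereal (sqdist K x z / (2*\<gamma>)) + g z}"

definition gfun :: "nat \<Rightarrow> real \<Rightarrow> (nat \<Rightarrow> real) \<Rightarrow> nat \<Rightarrow> real" where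
  "gfun K \<gamma> a n = 1/(2*\<gamma>) * (\<Sum>k=1..n. a k)^2 / real (K - n)
                   + 1/(2*\<gamma>) * (\<Sum>k=1..n. (a k)^2) - real n"

end

theory Submission
  imports Defs
begin

lemma cs_sum:
  fixes x :: "nat \<Rightarrow> real"
  assumes "finite T" "T \<noteq> {}"
  shows "(\<Sum>k\<in>T. x k)^2 / card T \<le> (\<Sum>k\<in>T. (x k)^2)"
proof -
  define n where "n = real (card T)"
  define s where "s = (\<Sum>k\<in>T. x k)"
  have n: "n > 0" using assms by (simp add: n_def card_gt_0_iff)
  have e: "(\<Sum>k\<in>T. (x k - a)^2) = (\<Sum>k\<in>T. (x k)^2) - 2*a*(\<Sum>k\<in>T. x k) + n*a^2" for a
  proof -
    have "(\<Sum>k\<in>T. 2 * x k * a) = (\<Sum>k\<in>T. x k) * (2*a)" unfolding sum_distrib_right by (rule sum.cong) (simp_all add: mult_ac)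
    then show ?thesis unfolding power2_diff sum_subtractf sum.distrib by (simp add: n_def)
  qed
  have "0 \<le> (\<Sum>k\<in>T. (x k - s/n)^2)" by (simp add: sum_nonneg)
  also have "\<dots> = (\<Sum>k\<in>T. (x k)^2) - 2*(s/n) * s + n*((s/n)^2)"
    unfolding e s_def ..
  also have "\<dots> = (\<Sum>k\<in>T. (x k)^2) - s^2/n" using n by (simp add: field_simps power2_eq_square)
  finally show ?thesis by (simp add: s_def n_def)
qed

lemma rearr:
  fixes f :: "nat \<Rightarrow> real"
  assumes mono: "\<forall>i j. 1 \<le> i \<longrightarrow> i \<le> j \<longrightarrow> j \<le> K \<longrightarrow> f i \<le> f j"
    and J: "J \<subseteq> {1..K}" and cJ: "card J = n"
  shows "(\<Sum>k=1..n. f k) \<le> sum f J"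
proof -
  have fJ: "finite J" using J finite_subset by blast
  show ?thesis
  proof (cases "n = 0")
    case True then have "J = {}" using fJ cJ by simp
    then show ?thesis using True by simp
  next
    case False
    have nK: "n \<le> K" using card_mono[OF _ J] cJ by simp
    define A where "A = {1..n} - J"
    define B where "B = J - {1..n}"
    define I where "I = {1..n} \<inter> J"
    have s1: "(\<Sum>k=1..n. f k) = sum f I + sum f A"
      unfolding A_def I_def by (rule sum.Int_Diff) simp
    have s2: "sum f J = sum f I + sum f B"
    proof -
      have "sum f J = sum f (J \<inter> {1..n}) + sum f (J - {1..n})" using fJ by (rule sum.Int_Diff)
      then show ?thesis unfolding B_def I_def by (simp add: Int_commute)
    qed
    have cA: "card A = n - card I" unfolding A_def I_def
      by (subst card_Diff_subset_Int) simp_all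
    have cB0: "card B = card J - card (J \<inter> {1..n})" unfolding B_def
      by (rule card_Diff_subset_Int) (use fJ in simp)
    have cB: "card B = n - card I" using cB0 cJ unfolding I_def by (simp add: Int_commute)
    have "sum f A \<le> of_nat (card A) * f n"
    proof (rule sum_bounded_above)
      fix k assume "k \<in> A"
      then have "1 \<le> k" "k \<le> n" unfolding A_def by auto
      then show "f k \<le> f n" using mono nK by blast
    qed
    also have "\<dots> = of_nat (card B) * f n" using cA cB by simp
    also have "\<dots> \<le> sum f B"
    proof (rule sum_bounded_below)
      fix k assume "k \<in> B"
      then have "n \<le> k" "k \<le> K" using J unfolding B_def by auto
      then show "f n \<le> f k" using mono False by (metis less_one not_less)
    qed
    finally show ?thesis using s1 s2 by simp
  qed
qed

lemma simplex_facts: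
  assumes "a \<in> prob_simplex K"
  shows "\<forall>k\<in>{1..K}. a k \<ge> 0" "(\<Sum>k=1..K. a k) = 1" "\<forall>k. k \<notin> {1..K} \<longrightarrow> a k = 0"
    "\<forall>k. a k \<ge> 0"
proof -
  show 1: "\<forall>k\<in>{1..K}. a k \<ge> 0" "(\<Sum>k=1..K. a k) = 1" and 2: "\<forall>k. k \<notin> {1..K} \<longrightarrow> a k = 0"
    using assms unfolding prob_simplex_def RK_def by auto
  show "\<forall>k. a k \<ge> 0" using 1 2 by (metis order_refl)
qed

lemma val_simp:
  "y \<in> prob_simplex K \<Longrightarrow> ereal (sqdist K x y / (2*\<gamma>)) + hfun K y
     = ereal (sqdist K x y / (2*\<gamma>) + real (l0norm K y))"
  by (simp add: hfun_def indicator_simplex_def)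

lemma val_inf:
  "y \<notin> prob_simplex K \<Longrightarrow> ereal (sqdist K x y / (2*\<gamma>)) + hfun K y = \<infinity>"
  by (simp add: hfun_def indicator_simplex_def)

lemma split_sum:
  fixes K :: nat
  assumes "T \<subseteq> {1..K}"
  shows "sum f {1..K} = sum f T + sum f ({1..K} - T)"
proof -
  have "sum f {1..K} = sum f ({1..K} - T) + sum f T" by (rule sum.subset_diff[OF assms]) simp
  also have "\<dots> = sum f T + sum f ({1..K} - T)" by (rule add.commute)
  finally show ?thesis .
qed

lemma cand:
  assumes a: "\<alpha> \<in> prob_simplex K" and T: "T \<subseteq> {1..K}" "T \<noteq> {}"
  defines "J \<equiv> {1..K} - T"
  defines "z \<equiv> (\<lambda>k. if k \<in> T then \<alpha> k + (\<Sum>j\<in>J. \<alpha> j) / card T else 0)"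
  shows "z \<in> prob_simplex K"
    "sqdist K \<alpha> z = (\<Sum>k\<in>J. (\<alpha> k)^2) + (\<Sum>k\<in>J. \<alpha> k)^2 / card T"
    "l0norm K z \<le> card T"
proof -
  have fT: "finite T" using T finite_subset by blast
  have cT: "card T > 0" using fT T by (simp add: card_gt_0_iff)
  note af = simplex_facts[OF a]
  define c where "c = (\<Sum>j\<in>J. \<alpha> j) / card T"
  have c0: "c \<ge> 0" unfolding c_def using af by (auto intro!: sum_nonneg divide_nonneg_nonneg)
  have zT: "\<And>k. k \<in> T \<Longrightarrow> z k = \<alpha> k + c" and zJ: "\<And>k. k \<notin> T \<Longrightarrow> z k = 0"
    unfolding z_def c_def by auto
  have "(\<Sum>k=1..K. z k) = sum z T + sum z J" using split_sum[OF T(1)] J_def by simp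
  also have "\<dots> = sum \<alpha> T + card T * c" using zT zJ by (simp add: sum.distrib J_def)
  also have "card T * c = sum \<alpha> J" unfolding c_def using cT by simp
  also have "sum \<alpha> T + sum \<alpha> J = 1" using split_sum[OF T(1), of \<alpha>] af J_def by simp
  finally have s1: "(\<Sum>k=1..K. z k) = 1" .
  have "\<forall>k. k \<notin> {1..K} \<longrightarrow> z k = 0" using T(1) zJ by blast
  then have RK: "z \<in> RK K" by (simp add: RK_def)
  have nn: "z k \<ge> 0" for k
  proof (cases "k \<in> T")
    case True then show ?thesis using zT af(4) c0 by simp
  next
    case False then show ?thesis using zJ by simp
  qed
  show "z \<in> prob_simplex K" unfolding prob_simplex_def using RK nn s1 by simp
  have "sqdist K \<alpha> z = (\<Sum>k\<in>T. (\<alpha> k - z k)^2) + (\<Sum>k\<in>J. (\<alpha> k - z k)^2)"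
    unfolding sqdist_def using split_sum[OF T(1)] J_def by simp
  also have "(\<Sum>k\<in>T. (\<alpha> k - z k)^2) = (\<Sum>k\<in>T. c^2)" by (rule sum.cong) (auto simp: zT)
  also have "(\<Sum>k\<in>T. c^2) = card T * c^2" by simp
  also have "card T * c^2 = (\<Sum>k\<in>J. \<alpha> k)^2 / card T" unfolding c_def using cT
    by (simp add: power2_eq_square)
  also have "(\<Sum>k\<in>J. (\<alpha> k - z k)^2) = (\<Sum>k\<in>J. (\<alpha> k)^2)" by (rule sum.cong) (auto simp: zJ J_def)
  finally show "sqdist K \<alpha> z = (\<Sum>k\<in>J. (\<alpha> k)^2) + (\<Sum>k\<in>J. \<alpha> k)^2 / card T" by simp
  have "{k\<in>{1..K}. z k > 0} \<subseteq> T"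
  proof
    fix k assume "k \<in> {k\<in>{1..K}. z k > 0}"
    then have "z k \<noteq> 0" by auto
    then show "k \<in> T" using zJ by blast
  qed
  then show "l0norm K z \<le> card T" unfolding l0norm_def using fT by (simp add: card_mono)
qed

lemma LB:
  assumes a: "\<alpha> \<in> prob_simplex K" and b: "\<beta> \<in> prob_simplex K"
  defines "T \<equiv> {k\<in>{1..K}. \<beta> k > 0}"
  defines "J \<equiv> {1..K} - T"
  shows "T \<noteq> {}" "l0norm K \<beta> = card T"
    "(\<Sum>k\<in>J. (\<alpha> k)^2) + (\<Sum>k\<in>J. \<alpha> k)^2 / card T \<le> sqdist K \<alpha> \<beta>"
proof -
  note af = simplex_facts[OF a] and bf = simplex_facts[OF b]
  have T1: "T \<subseteq> {1..K}" unfolding T_def by auto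
  have fT: "finite T" using T1 finite_subset by blast
  have bJ: "\<beta> k = 0" if "k \<in> J" for k
  proof -
    have "k \<in> {1..K}" "\<not> \<beta> k > 0" using that unfolding J_def T_def by auto
    moreover have "\<beta> k \<ge> 0" using bf(4) by blast
    ultimately show ?thesis by linarith
  qed
  have sJ: "sum f {1..K} = sum f T + sum f J" for f :: "nat \<Rightarrow> real"
    using split_sum[OF T1] unfolding J_def .
  have "sum \<beta> J = 0" by (rule sum.neutral) (use bJ in blast)
  then have sb: "sum \<beta> T = 1" using sJ[of \<beta>] bf(2) by linarith
  then show ne: "T \<noteq> {}" by auto
  show "l0norm K \<beta> = card T" unfolding l0norm_def T_def ..
  have sa: "sum \<alpha> T + sum \<alpha> J = 1" using sJ[of \<alpha>] af(2) by linarith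
  have "sqdist K \<alpha> \<beta> = (\<Sum>k\<in>T. (\<alpha> k - \<beta> k)^2) + (\<Sum>k\<in>J. (\<alpha> k - \<beta> k)^2)"
    unfolding sqdist_def by (rule sJ)
  also have "(\<Sum>k\<in>J. (\<alpha> k - \<beta> k)^2) = (\<Sum>k\<in>J. (\<alpha> k)^2)"
    by (rule sum.cong) (simp_all add: bJ)
  also have "(\<Sum>k\<in>T. (\<alpha> k - \<beta> k)^2) = (\<Sum>k\<in>T. (\<beta> k - \<alpha> k)^2)"
    by (rule sum.cong) (simp_all add: power2_eq_square algebra_simps)
  finally have e: "sqdist K \<alpha> \<beta> = (\<Sum>k\<in>T. (\<beta> k - \<alpha> k)^2) + (\<Sum>k\<in>J. (\<alpha> k)^2)" .
  have "(\<Sum>k\<in>T. \<beta> k - \<alpha> k) = sum \<beta> T - sum \<alpha> T" by (rule sum_subtractf)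
  then have "(\<Sum>k\<in>T. \<beta> k - \<alpha> k) = sum \<alpha> J" using sa sb by linarith
  with cs_sum[OF fT ne, of "\<lambda>k. \<beta> k - \<alpha> k"]
  have "(sum \<alpha> J)^2 / card T \<le> (\<Sum>k\<in>T. (\<beta> k - \<alpha> k)^2)" by simp
  then show "(\<Sum>k\<in>J. (\<alpha> k)^2) + (\<Sum>k\<in>J. \<alpha> k)^2 / card T \<le> sqdist K \<alpha> \<beta>" unfolding e by linarith
qed


lemma alg0: "((q::real) + s^2/r)/(2*g) = 1/(2*g) * s^2/r + 1/(2*g)*q - k + k"
  by (simp add: add_divide_distrib)

lemma alg1: "(ct::real) = Kr - nr \<Longrightarrow> 1/(2*g) * s^2/(Kr - nr) + 1/(2*g)*q - nr + Kr = q/(2*g) + s^2/ct/(2*g) + ct"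
  by simp

lemma mono_sq:
  assumes a: "\<alpha> \<in> prob_simplex K"
    and m: "\<forall>i j. 1 \<le> i \<longrightarrow> i \<le> j \<longrightarrow> j \<le> K \<longrightarrow> \<alpha> i \<le> \<alpha> j"
  shows "\<forall>i j. 1 \<le> i \<longrightarrow> i \<le> j \<longrightarrow> j \<le> K \<longrightarrow> (\<alpha> i)^2 \<le> (\<alpha> j)^2"
proof (intro allI impI)
  fix i j :: nat assume "1 \<le> i" "i \<le> j" "j \<le> K"
  then have "\<alpha> i \<le> \<alpha> j" using m by blast
  moreover have "0 \<le> \<alpha> i" using simplex_facts(4)[OF a] by blast
  ultimately show "(\<alpha> i)^2 \<le> (\<alpha> j)^2" by (rule power_mono)
qed

theorem lemma3:
  fixes K K0 :: nat and \<gamma> :: real and \<alpha> :: "nat \<Rightarrow> real"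
  assumes "\<gamma> > 0"
    and "\<alpha> \<in> prob_simplex K"
    and "\<forall>i j. 1 \<le> i \<longrightarrow> i \<le> j \<longrightarrow> j \<le> K \<longrightarrow> \<alpha> i \<le> \<alpha> j"
    and "K0 < K"
    and "\<forall>n<K. gfun K \<gamma> \<alpha> K0 \<le> gfun K \<gamma> \<alpha> n"
  shows "(\<lambda>k. if k \<in> {1..K} then
               (if k \<le> K0 then 0 else \<alpha> k + (\<Sum>j=1..K0. \<alpha> j) / real (K - K0))
             else 0) \<in> prox K \<gamma> (hfun K) \<alpha>
     \<and> (\<forall>i\<in>{1..K}. \<alpha> i = 0 \<longrightarrow> (\<forall>\<beta> \<in> prox K \<gamma> (hfun K) \<alpha>. \<beta> i = 0))"
proof -
  note g = assms(1) and a = assms(2) and m = assms(3) and K0 = assms(4) and gmin = assms(5)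
  note af = simplex_facts[OF a]
  note m2 = mono_sq[OF a m]
  define V where "V = (\<lambda>y. ereal (sqdist K \<alpha> y / (2*\<gamma>)) + hfun K y)"
  have aRK: "\<alpha> \<in> RK K" using a unfolding prob_simplex_def by simp
  have Va: "V \<alpha> = ereal (real (l0norm K \<alpha>))"
    unfolding V_def val_simp[OF a] by (simp add: sqdist_def)
  have lowb: "V z \<ge> ereal ((\<Sum>k\<in>({1..K} - {k\<in>{1..K}. z k > 0}). (\<alpha> k)^2) / (2*\<gamma>)
       + (\<Sum>k\<in>({1..K} - {k\<in>{1..K}. z k > 0}). \<alpha> k)^2 / card {k\<in>{1..K}. z k > 0} / (2*\<gamma>)
       + card {k\<in>{1..K}. z k > 0})" if z: "z \<in> prob_simplex K" for z
  proof -
    note L = LB[OF a z]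
    have "((\<Sum>k\<in>({1..K} - {k\<in>{1..K}. z k > 0}). (\<alpha> k)^2)
       + (\<Sum>k\<in>({1..K} - {k\<in>{1..K}. z k > 0}). \<alpha> k)^2 / card {k\<in>{1..K}. z k > 0}) / (2*\<gamma>)
       \<le> sqdist K \<alpha> z / (2*\<gamma>)"
      by (rule divide_right_mono[OF L(3)]) (use g in simp)
    then show ?thesis unfolding V_def val_simp[OF z] L(2) ereal_less_eq(3)
      by (simp only: add_divide_distrib)
  qed
  define C where "C = (\<lambda>k. if k \<in> {1..K} then
               (if k \<le> K0 then 0 else \<alpha> k + (\<Sum>j=1..K0. \<alpha> j) / real (K - K0)) else 0)"
  define T0 where "T0 = {K0+1..K}"
  have T0: "T0 \<subseteq> {1..K}" "T0 \<noteq> {}" unfolding T0_def using K0 by auto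
  have J0: "{1..K} - T0 = {1..K0}" unfolding T0_def using K0 by auto
  have cT0: "card T0 = K - K0" unfolding T0_def by simp
  have Ceq: "C = (\<lambda>k. if k \<in> T0 then \<alpha> k + (\<Sum>j\<in>{1..K} - T0. \<alpha> j) / card T0 else 0)"
    unfolding C_def J0 cT0 by (rule ext) (auto simp: T0_def)
  note cC = cand[OF a T0, folded Ceq, unfolded J0 cT0]
  have VC: "V C \<le> ereal (gfun K \<gamma> \<alpha> K0 + K)"
  proof -
    have "V C = ereal (sqdist K \<alpha> C / (2*\<gamma>) + real (l0norm K C))"
      unfolding V_def using val_simp[OF cC(1)] .
    moreover have "sqdist K \<alpha> C / (2*\<gamma>) = gfun K \<gamma> \<alpha> K0 + K0"
      unfolding cC(2) gfun_def by (rule alg0)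
    moreover have "real (l0norm K C) \<le> real K - K0" using cC(3) K0 by simp
    ultimately show ?thesis by simp
  qed
  have part1: "C \<in> prox K \<gamma> (hfun K) \<alpha>"
    unfolding prox_def
  proof (intro CollectI conjI ballI)
    show "C \<in> RK K" using cC(1) unfolding prob_simplex_def by simp
    fix z assume zR: "z \<in> RK K"
    show "ereal (sqdist K \<alpha> C / (2*\<gamma>)) + hfun K C \<le> ereal (sqdist K \<alpha> z / (2*\<gamma>)) + hfun K z"
    proof (cases "z \<in> prob_simplex K")
      case False then show ?thesis by (simp add: val_inf)
    next
      case True
      define T where "T = {k\<in>{1..K}. z k > 0}"
      define J where "J = {1..K} - T"
      define n where "n = card J"
      have T1: "T \<subseteq> {1..K}" unfolding T_def by auto
      have Tne: "T \<noteq> {}" using LB(1)[OF a True] unfolding T_def .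
      have fT: "finite T" using T1 finite_subset by blast
      have cTJ: "card T + n = K" unfolding n_def J_def using card_Diff_subset[OF fT T1] card_mono[OF _ T1] by simp
      have cTp: "card T > 0" using fT Tne by (simp add: card_gt_0_iff)
      have nK: "n < K" using cTJ cTp by simp
      have J1: "J \<subseteq> {1..K}" unfolding J_def by auto
      have r1: "(\<Sum>k=1..n. \<alpha> k) \<le> sum \<alpha> J" using rearr[OF m J1] n_def by simp
      have r2: "(\<Sum>k=1..n. (\<alpha> k)^2) \<le> (\<Sum>k\<in>J. (\<alpha> k)^2)" using rearr[OF m2 J1] n_def by simp
      have p0: "0 \<le> (\<Sum>k=1..n. \<alpha> k)" using af(4) by (simp add: sum_nonneg)
      have r1': "(\<Sum>k=1..n. \<alpha> k)^2 \<le> (sum \<alpha> J)^2" by (rule power_mono[OF r1 p0])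
      have cTr: "real (card T) = real K - real n" using cTJ by simp
      have "gfun K \<gamma> \<alpha> K0 + K \<le> gfun K \<gamma> \<alpha> n + K" using gmin nK by simp
      also have "gfun K \<gamma> \<alpha> n + K = (\<Sum>k=1..n. (\<alpha> k)^2) / (2*\<gamma>)
         + (\<Sum>k=1..n. \<alpha> k)^2 / card T / (2*\<gamma>) + card T"
      proof -
        have r: "real (K - n) = real K - real n" using nK by (simp add: of_nat_diff)
        show ?thesis unfolding gfun_def r by (rule alg1[OF cTr])
      qed
      also have "\<dots> \<le> (\<Sum>k\<in>J. (\<alpha> k)^2) / (2*\<gamma>) + (sum \<alpha> J)^2 / card T / (2*\<gamma>) + card T"
        using r1' r2 g cTp by (intro add_mono divide_right_mono) auto
      finally have R: "gfun K \<gamma> \<alpha> K0 + K \<le> (\<Sum>k\<in>J. (\<alpha> k)^2) / (2*\<gamma>) + (sum \<alpha> J)^2 / card T / (2*\<gamma>) + card T" .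
      have "V C \<le> ereal (gfun K \<gamma> \<alpha> K0 + K)" by (rule VC)
      also have "\<dots> \<le> ereal ((\<Sum>k\<in>J. (\<alpha> k)^2) / (2*\<gamma>) + (sum \<alpha> J)^2 / card T / (2*\<gamma>) + card T)"
        using R by simp
      also have "\<dots> \<le> V z" using lowb[OF True] unfolding T_def[symmetric] J_def[symmetric] .
      finally show ?thesis unfolding V_def .
    qed
  qed
  have part2: "\<beta> i = 0" if i: "i \<in> {1..K}" "\<alpha> i = 0" and b: "\<beta> \<in> prox K \<gamma> (hfun K) \<alpha>" for i \<beta>
  proof (rule ccontr)
    assume bi: "\<beta> i \<noteq> 0"
    have bR: "\<beta> \<in> RK K" and bopt: "\<And>z. z \<in> RK K \<Longrightarrow> V \<beta> \<le> V z"
      using b unfolding prox_def V_def by auto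
    have bS: "\<beta> \<in> prob_simplex K"
    proof (rule ccontr)
      assume "\<beta> \<notin> prob_simplex K"
      then have "V \<beta> = \<infinity>" unfolding V_def by (simp add: val_inf)
      with bopt[OF aRK] Va show False by simp
    qed
    note bf = simplex_facts[OF bS]
    define T where "T = {k\<in>{1..K}. \<beta> k > 0}"
    define J where "J = {1..K} - T"
    have T1: "T \<subseteq> {1..K}" unfolding T_def by auto
    have fT: "finite T" using T1 finite_subset by blast
    have iT: "i \<in> T" unfolding T_def using i bi bf(4) by (simp add: order_less_le)
    have Vb: "V \<beta> = ereal (sqdist K \<alpha> \<beta> / (2*\<gamma>) + card T)"
      unfolding V_def val_simp[OF bS] LB(2)[OF a bS] T_def ..
    have sq0: "sqdist K \<alpha> \<beta> \<ge> 0" unfolding sqdist_def by (simp add: sum_nonneg)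
    show False
    proof (cases "{k\<in>{1..K}. \<alpha> k > 0} \<subseteq> T")
      case True
      then have "{k\<in>{1..K}. \<alpha> k > 0} \<subseteq> T - {i}" using i by auto
      then have "l0norm K \<alpha> \<le> card (T - {i})" unfolding l0norm_def using fT by (simp add: card_mono)
      also have "\<dots> < card T" by (rule card_Diff1_less[OF fT iT])
      finally have lt: "l0norm K \<alpha> < card T" .
      have "0 \<le> sqdist K \<alpha> \<beta> / (2*\<gamma>)" using sq0 g by simp
      moreover have "real (l0norm K \<alpha>) < real (card T)" using lt by simp
      ultimately have "real (l0norm K \<alpha>) < sqdist K \<alpha> \<beta> / (2*\<gamma>) + card T" by linarith
      then have "V \<alpha> < V \<beta>" unfolding Va Vb by simp
      with bopt[OF aRK] show False by simp
    next
      case False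
      then obtain j where j: "j \<in> {1..K}" "\<alpha> j > 0" "j \<notin> T" by auto
      define T' where "T' = insert j (T - {i})"
      have T'1: "T' \<subseteq> {1..K}" "T' \<noteq> {}" unfolding T'_def using T1 j by auto
      have ij: "i \<noteq> j" using iT j by auto
      have cTp: "card T > 0" using fT iT by (auto simp: card_gt_0_iff)
      have cT': "card T' = card T" unfolding T'_def using fT j iT cTp
        by (simp add: card_insert_disjoint card_Diff_singleton)
      have jJ: "j \<in> J" unfolding J_def using j by simp
      have fJ: "finite J" unfolding J_def by simp
      have iJ: "i \<notin> J" unfolding J_def using iT by simp
      have J': "{1..K} - T' = insert i (J - {j})" unfolding T'_def J_def using i j iT ij by auto
      have sJ': "sum f ({1..K} - T') = f i + sum f J - f j" for f :: "nat \<Rightarrow> real"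
        unfolding J' using fJ jJ iJ by (simp add: sum_diff1)
      define s where "s = sum \<alpha> J"
      define q where "q = (\<Sum>k\<in>J. (\<alpha> k)^2)"
      have s1: "sum \<alpha> ({1..K} - T') = s - \<alpha> j" using sJ'[of \<alpha>] i by (simp add: s_def)
      have q1: "(\<Sum>k\<in>{1..K} - T'. (\<alpha> k)^2) = q - (\<alpha> j)^2" using sJ'[of "\<lambda>k. (\<alpha> k)^2"] i by (simp add: q_def)
      have "\<alpha> j \<le> s" unfolding s_def using member_le_sum[of j J \<alpha>] jJ fJ af(4) by simp
      then have ss: "(s - \<alpha> j)^2 \<le> s^2" using j(2) by (intro power_mono) auto
      note cz = cand[OF a T'1]
      define z where "z = (\<lambda>k. if k \<in> T' then \<alpha> k + (\<Sum>j\<in>{1..K} - T'. \<alpha> j) / card T' else 0)"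
      have zS: "z \<in> prob_simplex K" unfolding z_def by (rule cz(1))
      have zR: "z \<in> RK K" using zS unfolding prob_simplex_def by simp
      have "V z = ereal (sqdist K \<alpha> z / (2*\<gamma>) + real (l0norm K z))"
        unfolding V_def using val_simp[OF zS] .
      also have "\<dots> = ereal ((q - (\<alpha> j)^2 + (s - \<alpha> j)^2 / card T) / (2*\<gamma>) + real (l0norm K z))"
        using cz(2) s1 q1 cT' unfolding z_def[symmetric] by simp
      also have "\<dots> \<le> ereal ((q - (\<alpha> j)^2 + (s - \<alpha> j)^2 / card T) / (2*\<gamma>) + card T)"
        using cz(3) cT' unfolding z_def[symmetric] by simp
      also have "\<dots> < ereal ((q + s^2 / card T) / (2*\<gamma>) + card T)"
      proof -
        have "(s - \<alpha> j)^2 / card T \<le> s^2 / card T" using ss cTp by (intro divide_right_mono) auto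
        moreover have "(\<alpha> j)^2 > 0" using j(2) by simp
        ultimately have "q - (\<alpha> j)^2 + (s - \<alpha> j)^2 / card T < q + s^2 / card T" by linarith
        then have "(q - (\<alpha> j)^2 + (s - \<alpha> j)^2 / card T) / (2*\<gamma>) < (q + s^2 / card T) / (2*\<gamma>)"
          using g by (intro divide_strict_right_mono) auto
        then show ?thesis by simp
      qed
      also have "\<dots> \<le> V \<beta>"
      proof -
        have "(q + s^2 / card T) / (2*\<gamma>) \<le> sqdist K \<alpha> \<beta> / (2*\<gamma>)"
          using LB(3)[OF a bS] g unfolding T_def[symmetric] J_def[symmetric] s_def q_def
          by (intro divide_right_mono) auto
        then show ?thesis unfolding Vb by simp
      qed
      finally have "V z < V \<beta>" .
      with bopt[OF zR] show False by simp
    qed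
  qed
  show ?thesis using part1 part2 unfolding C_def by blast
qed

end
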